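(* Let $\nu\in\mathcal P_s$ with $\nu(\{0\})=0$ and let $a>0$ with $\nu(\{a\})=0$. Then for all $n\ge1$, $$II(n,a,a)=G(a)^{n-1}\big[nH(a)+G(a)\big].$$
   Context: Fix $\alpha>0$. $\mathcal P_s$ is the set of symmetric Borel probability measures on $\mathbb R$. For $x\in\mathbb R$, $\widetilde\delta_x=\frac12(\delta_x+\delta_{-x})$. For a probability measure $\lambda=\mathcal L(X)$ and $c>0$, $T_c\lambda=\mathcal L(cX)$, and $T_0\lambda=\delta_0$. $\widetilde\pi_{2\alpha}$ is the symmetric Pareto probability measure with density $\alpha|y|^{-2\alpha-1}\mathbf 1_{\{|y|\ge1\}}$. The Kendall convolution $\vartriangle_\alpha$ on $\mathcal P_s$ is defined by $\widetilde\delta_x\vartriangle_\alpha\widetilde\delta_y=T_M\big(\varrho^\alpha\widetilde\pi_{2\alpha}+(1-\varrho^\alpha)\widetilde\delta_1\big)$ where $M=\max(|x|,|y|)$, $m=\min(|x|,|y|)$, $\varrho=m/M$ (and $\varrho=0$ if $M=0$), extended by $(\nu_1\vartriangle_\alpha\nu_2)(A)=\int\int(\widetilde\delta_x\vartriangle_\alpha\widetilde\delta_y)(A)\,\nu_1(dx)\nu_2(dy)$. For $x\in\mathbb R$ and $\mu\in\mathcal P_s$ we write $\delta_x\vartriangle_\alpha\mu:=\widetilde\delta_x\vartriangle_\alpha\mu$. $\Psi(t)=(1-|t|^\alpha)_+$. For the measure $\nu$: $F(t)=\nu((-\infty,t])$, $G(t)=\int_{\mathbb R}\Psi(x/t)\,\nu(dx)$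 for $t\neq0$, and for $t>0$, $H(t)=2F(t)-1-G(t)=t^{-\alpha}\int_{[-t,t]}|x|^\alpha\nu(dx)$. The Kendall random walk with step distribution $\nu$ is the Markov chain $(X_n)_{n\ge0}$ with $X_0=0$ and transition kernel $\mathbb P(X_{k+1}\in A\mid X_k=x)=(\delta_x\vartriangle_\alpha\nu)(A)$. For $a,t>0$ and $n\ge1$, $II(n,a,t)=\int_{(-\infty,a]}\cdots\int_{(-\infty,a]}\mathbf 1_{\{|x_n|<t\}}\,(\delta_{x_{n-1}}\vartriangle_\alpha\nu)(dx_n)\cdots(\delta_{x_1}\vartriangle_\alpha\nu)(dx_2)\,\nu(dx_1)$ ($n$ integrations), i.e. $II(n,a,t)=\mathbb P(X_1\le a,\dots,X_n\le a,\ |X_n|<t)$. *)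

theory Defs
  imports "HOL-Probability.Probability"
begin

definition sym_delta :: "real \<Rightarrow> real measure" where
  "sym_delta x = measure_of UNIV (sets borel)
     (\<lambda>A. (indicator A x + indicator A (-x)) / 2)"

definition sym_pareto :: "real \<Rightarrow> real measure" where
  "sym_pareto \<alpha> = density lborel
     (\<lambda>y. ennreal (if \<bar>y\<bar> \<ge> 1 then \<alpha> * \<bar>y\<bar> powr (- 2 * \<alpha> - 1) else 0))"

definition dil :: "real \<Rightarrow> real measure \<Rightarrow> real measure" where
  "dil c \<mu> = (if c = 0 then return borel 0 else distr \<mu> borel (\<lambda>x. c * x))"

definition mixture :: "real \<Rightarrow> real measure \<Rightarrow> real measure \<Rightarrow> real measure" where
  "mixture p \<mu> \<kappa> = measure_of UNIV (sets borel)
     (\<lambda>A. ennreal p * emeasure \<mu> A + ennreal (1 - p) * emeasure \<kappa> A)"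

definition kendall_pt :: "real \<Rightarrow> real \<Rightarrow> real \<Rightarrow> real measure" where
  "kendall_pt \<alpha> x y =
     (let M = max \<bar>x\<bar> \<bar>y\<bar>; m = min \<bar>x\<bar> \<bar>y\<bar>;
          \<rho> = (if M = 0 then 0 else m / M)
      in dil M (mixture (\<rho> powr \<alpha>) (sym_pareto \<alpha>) (sym_delta 1)))"

definition kendall_conv :: "real \<Rightarrow> real measure \<Rightarrow> real measure \<Rightarrow> real measure" where
  "kendall_conv \<alpha> \<nu>1 \<nu>2 = measure_of UNIV (sets borel)
     (\<lambda>A. \<integral>\<^sup>+ x. \<integral>\<^sup>+ y. emeasure (kendall_pt \<alpha> x y) A \<partial>\<nu>2 \<partial>\<nu>1)"

text \<open>Transition kernel of the Kendall random walk: delta_x conv nu := sym_delta x conv nu.\<close>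
definition kstep :: "real \<Rightarrow> real measure \<Rightarrow> real \<Rightarrow> real measure" where
  "kstep \<alpha> \<nu> x = kendall_conv \<alpha> (sym_delta x) \<nu>"

definition Psi :: "real \<Rightarrow> real \<Rightarrow> real" where
  "Psi \<alpha> t = max 0 (1 - \<bar>t\<bar> powr \<alpha>)"

definition cdfF :: "real measure \<Rightarrow> real \<Rightarrow> real" where
  "cdfF \<nu> t = measure \<nu> {..t}"

definition GG :: "real \<Rightarrow> real measure \<Rightarrow> real \<Rightarrow> real" where
  "GG \<alpha> \<nu> t = (\<integral>x. Psi \<alpha> (x / t) \<partial>\<nu>)"

definition HH :: "real \<Rightarrow> real measure \<Rightarrow> real \<Rightarrow> real" where
  "HH \<alpha> \<nu> t = t powr (- \<alpha>) * (\<integral>x. indicator {-t..t} x * \<bar>x\<bar> powr \<alpha> \<partial>\<nu>)"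

text \<open>Innermost-first integrands of II(n,a,t): W k x is the integral over the last k
  coordinates given the current position x (itself required to be <= a).\<close>
fun IIw :: "real \<Rightarrow> real measure \<Rightarrow> real \<Rightarrow> real \<Rightarrow> nat \<Rightarrow> real \<Rightarrow> ennreal" where
  "IIw \<alpha> \<nu> a t 0 x = indicator {..a} x * indicator {y. \<bar>y\<bar> < t} x"
| "IIw \<alpha> \<nu> a t (Suc k) x =
     indicator {..a} x * (\<integral>\<^sup>+ y. IIw \<alpha> \<nu> a t k y \<partial>(kstep \<alpha> \<nu> x))"

definition II :: "real \<Rightarrow> real measure \<Rightarrow> nat \<Rightarrow> real \<Rightarrow> real \<Rightarrow> ennreal" where
  "II \<alpha> \<nu> n a t = (\<integral>\<^sup>+ x. IIw \<alpha> \<nu> a t (n - 1) x \<partial>\<nu>)"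

end

theory Submission
  imports Defs
begin


lemma sig_borel: "sigma_sets (UNIV::real set) (sets borel) = sets borel"
  by (metis sets.sigma_sets_eq space_borel)

lemma comb_measure:
  fixes M1 M2 :: "real measure" and c d :: ennreal
  assumes s1: "sets M1 = sets borel" and s2: "sets M2 = sets borel"
  shows "sets (measure_of UNIV (sets borel) (\<lambda>A. c * emeasure M1 A + d * emeasure M2 A)) = sets borel"
    and "A \<in> sets borel \<Longrightarrow> emeasure (measure_of UNIV (sets borel) (\<lambda>A. c * emeasure M1 A + d * emeasure M2 A)) A
           = c * emeasure M1 A + d * emeasure M2 A"
proof -
  show "sets (measure_of UNIV (sets borel) (\<lambda>A. c * emeasure M1 A + d * emeasure M2 A)) = sets borel"
    by (subst sets_measure_of) (auto simp: sig_borel)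
  assume A: "A \<in> sets borel"
  show "emeasure (measure_of UNIV (sets borel) (\<lambda>A. c * emeasure M1 A + d * emeasure M2 A)) A
           = c * emeasure M1 A + d * emeasure M2 A"
  proof (rule emeasure_measure_of_sigma[OF _ _ _ A])
    show "sigma_algebra UNIV (sets borel)"
      by (metis sets.sigma_algebra_axioms space_borel)
    show "positive (sets borel) (\<lambda>A. c * emeasure M1 A + d * emeasure M2 A)"
      by (simp add: positive_def)
    show "countably_additive (sets borel) (\<lambda>A. c * emeasure M1 A + d * emeasure M2 A)"
    proof (unfold countably_additive_def, intro allI impI)
      fix F :: "nat \<Rightarrow> real set"
      assume F: "range F \<subseteq> sets borel" "disjoint_family F" "\<Union> (range F) \<in> sets borel"
      have e1: "(\<Sum>i. emeasure M1 (F i)) = emeasure M1 (\<Union> (range F))"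
        using F s1 by (intro suminf_emeasure) auto
      have e2: "(\<Sum>i. emeasure M2 (F i)) = emeasure M2 (\<Union> (range F))"
        using F s2 by (intro suminf_emeasure) auto
      show "(\<Sum>i. c * emeasure M1 (F i) + d * emeasure M2 (F i)) = c * emeasure M1 (\<Union> (range F)) + d * emeasure M2 (\<Union> (range F))"
        by (simp add: suminf_add[symmetric] ennreal_suminf_cmult e1[symmetric] e2[symmetric])
    qed
  qed
qed

lemma comb_nn_integral:
  fixes M1 M2 N :: "real measure" and c d :: ennreal
  assumes s1: "sets M1 = sets borel" and s2: "sets M2 = sets borel" and sN: "sets N = sets borel"
    and eN: "\<And>A. A \<in> sets borel \<Longrightarrow> emeasure N A = c * emeasure M1 A + d * emeasure M2 A"
    and f: "f \<in> borel_measurable borel"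
  shows "(\<integral>\<^sup>+x. f x \<partial>N) = c * (\<integral>\<^sup>+x. f x \<partial>M1) + d * (\<integral>\<^sup>+x. f x \<partial>M2)"
  using f
proof -
  have ms: "measurable M1 (borel::ennreal measure) = borel_measurable borel"
     "measurable M2 (borel::ennreal measure) = borel_measurable borel"
     "measurable N (borel::ennreal measure) = borel_measurable borel"
    by (rule measurable_cong_sets; simp add: s1 s2 sN)+
  show ?thesis using f
proof (induction rule: borel_measurable_induct)
  case (cong f g)
  then show ?case by (simp add: cong)
next
  case (set A)
  have "A \<in> sets M1" "A \<in> sets M2" "A \<in> sets N" using set s1 s2 sN by auto
  then have h: "integral\<^sup>N N (indicator A) = emeasure N A" "integral\<^sup>N M1 (indicator A) = emeasure M1 A"
     "integral\<^sup>N M2 (indicator A) = emeasure M2 A" by (auto intro!: nn_integral_indicator)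
  have "integral\<^sup>N N (indicator A) = c * emeasure M1 A + d * emeasure M2 A"
    using h(1) eN[OF set] by simp
  then show ?case by (simp only: h(2,3))
next
  case (mult u k)
  have m1: "u \<in> borel_measurable M1" "u \<in> borel_measurable M2" "u \<in> borel_measurable N"
    using mult(2) ms by auto
  show ?case using mult(4) m1
    by (simp only: nn_integral_cmult distrib_left mult.assoc mult.left_commute)
next
  case (add u v)
  have m1: "u \<in> borel_measurable M1" "u \<in> borel_measurable M2" "u \<in> borel_measurable N"
     "v \<in> borel_measurable M1" "v \<in> borel_measurable M2" "v \<in> borel_measurable N"
    using add ms by auto
  show ?case using add m1
    by (simp add: nn_integral_add algebra_simps)
next
  case (seq U)
  have m1: "\<And>i. U i \<in> borel_measurable M1" "\<And>i. U i \<in> borel_measurable M2" "\<And>i. U i \<in> borel_measurable N"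
    using seq(1) ms by auto
  have i1: "incseq (\<lambda>i. \<integral>\<^sup>+x. U i x \<partial>M1)" "incseq (\<lambda>i. \<integral>\<^sup>+x. U i x \<partial>M2)"
    using \<open>incseq U\<close> by (auto simp: incseq_def le_fun_def intro!: nn_integral_mono)
  have "(\<integral>\<^sup>+x. (SUP i. U i) x \<partial>N) = (SUP i. \<integral>\<^sup>+x. U i x \<partial>N)"
    using m1 \<open>incseq U\<close> by (simp add: nn_integral_monotone_convergence_SUP[symmetric] image_comp)
  also have "\<dots> = (SUP i. c * (\<integral>\<^sup>+x. U i x \<partial>M1) + d * (\<integral>\<^sup>+x. U i x \<partial>M2))"
    using seq by simp
  also have "\<dots> = c * (SUP i. \<integral>\<^sup>+x. U i x \<partial>M1) + d * (SUP i. \<integral>\<^sup>+x. U i x \<partial>M2)"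
    apply (subst ennreal_SUP_add)
    using i1 by (auto simp: incseq_def intro: mult_left_mono simp: SUP_mult_left_ennreal)
  also have "\<dots> = c * (\<integral>\<^sup>+x. (SUP i. U i) x \<partial>M1) + d * (\<integral>\<^sup>+x. (SUP i. U i) x \<partial>M2)"
    using m1 \<open>incseq U\<close> by (simp add: nn_integral_monotone_convergence_SUP[symmetric] image_comp)
  finally show ?case .
qed
qed


lemma half_split: "((a::ennreal) + b) / 2 = (1/2) * a + (1/2) * b"
  by (simp add: ennreal_divide_times add_divide_distrib_ennreal)

lemma sym_delta_eq: "sym_delta x = measure_of UNIV (sets borel)
   (\<lambda>A. (1/2) * emeasure (return borel x) A + (1/2) * emeasure (return borel (-x)) A)"
  unfolding sym_delta_def
  by (rule measure_of_eq) (auto simp: sig_borel half_split)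

lemma sets_sym_delta[simp]: "sets (sym_delta x) = sets borel"
  unfolding sym_delta_eq by (rule comb_measure) auto

lemma space_sym_delta[simp]: "space (sym_delta x) = UNIV"
  using sets_eq_imp_space_eq[OF sets_sym_delta] by simp

lemma emeasure_sym_delta: "A \<in> sets borel \<Longrightarrow>
   emeasure (sym_delta x) A = (1/2) * indicator A x + (1/2) * indicator A (-x)"
  unfolding sym_delta_eq by (subst comb_measure) auto

lemma nn_integral_sym_delta: "f \<in> borel_measurable borel \<Longrightarrow>
   (\<integral>\<^sup>+z. f z \<partial>sym_delta x) = (1/2) * f x + (1/2) * f (-x)"
  by (subst comb_nn_integral[of "return borel x" "return borel (-x)" _ "1/2" "1/2"])
     (auto simp: emeasure_sym_delta nn_integral_return)

lemma AE_sym_delta: "AE z in sym_delta x. z = x \<or> z = -x"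
proof (rule AE_I[where N="UNIV - {x, -x}"])
  show "emeasure (sym_delta x) (UNIV - {x, - x}) = 0"
    by (subst emeasure_sym_delta) auto
qed auto

lemma sets_mixture[simp]: "sets \<mu> = sets borel \<Longrightarrow> sets \<kappa> = sets borel \<Longrightarrow> sets (mixture p \<mu> \<kappa>) = sets borel"
  unfolding mixture_def by (rule comb_measure)

lemma nn_integral_mixture: "sets \<mu> = sets borel \<Longrightarrow> sets \<kappa> = sets borel \<Longrightarrow> f \<in> borel_measurable borel \<Longrightarrow>
   (\<integral>\<^sup>+z. f z \<partial>mixture p \<mu> \<kappa>) = ennreal p * (\<integral>\<^sup>+z. f z \<partial>\<mu>) + ennreal (1-p) * (\<integral>\<^sup>+z. f z \<partial>\<kappa>)"
  unfolding mixture_def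
  by (rule comb_nn_integral) (auto intro: comb_measure simp: sig_borel)

definition dens :: "real \<Rightarrow> real \<Rightarrow> real" where
  "dens \<alpha> w = (if 1 \<le> \<bar>w\<bar> then \<alpha> * \<bar>w\<bar> powr (- 2 * \<alpha> - 1) else 0)"

lemma dens_meas[measurable]: "dens \<alpha> \<in> borel_measurable borel"
  unfolding dens_def by measurable

lemma sets_sym_pareto[simp]: "sets (sym_pareto \<alpha>) = sets borel"
  unfolding sym_pareto_def by simp

lemma nn_integral_sym_pareto: "f \<in> borel_measurable borel \<Longrightarrow>
  (\<integral>\<^sup>+z. f z \<partial>sym_pareto \<alpha>) = (\<integral>\<^sup>+w. ennreal (dens \<alpha> w) * f w \<partial>lborel)"
  unfolding sym_pareto_def dens_def[symmetric]
  by (subst nn_integral_density) auto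

lemma sets_kendall_pt[simp]: "sets (kendall_pt \<alpha> x y) = sets borel"
  unfolding kendall_pt_def Let_def dil_def by auto

lemma nn_integral_kendall_pt:
  assumes f: "f \<in> borel_measurable borel"
  shows "(\<integral>\<^sup>+z. f z \<partial>kendall_pt \<alpha> x y) =
    (if max \<bar>x\<bar> \<bar>y\<bar> = 0 then f 0 else
     ennreal ((min \<bar>x\<bar> \<bar>y\<bar> / max \<bar>x\<bar> \<bar>y\<bar>) powr \<alpha>) * (\<integral>\<^sup>+w. ennreal (dens \<alpha> w) * f (max \<bar>x\<bar> \<bar>y\<bar> * w) \<partial>lborel)
     + ennreal (1 - (min \<bar>x\<bar> \<bar>y\<bar> / max \<bar>x\<bar> \<bar>y\<bar>) powr \<alpha>) *
        ((1/2) * f (max \<bar>x\<bar> \<bar>y\<bar>) + (1/2) * f (- max \<bar>x\<bar> \<bar>y\<bar>)))"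
proof (cases "max \<bar>x\<bar> \<bar>y\<bar> = 0")
  case True
  then have "x = 0" "y = 0" by (auto simp: max_def split: if_splits)
  then show ?thesis unfolding kendall_pt_def Let_def dil_def
    using f by (simp add: nn_integral_return)
next
  case False
  define M where "M = max \<bar>x\<bar> \<bar>y\<bar>"
  define p where "p = (min \<bar>x\<bar> \<bar>y\<bar> / max \<bar>x\<bar> \<bar>y\<bar>) powr \<alpha>"
  have km: "kendall_pt \<alpha> x y = distr (mixture p (sym_pareto \<alpha>) (sym_delta 1)) borel (\<lambda>z. M * z)"
    unfolding kendall_pt_def Let_def dil_def M_def p_def using False by simp
  have T: "(\<lambda>z. M * z) \<in> measurable (mixture p (sym_pareto \<alpha>) (sym_delta 1)) borel"
    by (subst measurable_cong_sets[where M'=borel and N'=borel]) auto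
  have fM: "(\<lambda>z. f (M * z)) \<in> borel_measurable borel" using f by measurable
  have "(\<integral>\<^sup>+z. f z \<partial>kendall_pt \<alpha> x y) = (\<integral>\<^sup>+z. f (M * z) \<partial>mixture p (sym_pareto \<alpha>) (sym_delta 1))"
    unfolding km using T f by (simp add: nn_integral_distr)
  also have "\<dots> = ennreal p * (\<integral>\<^sup>+z. f (M * z) \<partial>sym_pareto \<alpha>) + ennreal (1-p) * (\<integral>\<^sup>+z. f (M * z) \<partial>sym_delta 1)"
    using fM by (rule nn_integral_mixture[OF sets_sym_pareto sets_sym_delta])
  also have "\<dots> = ennreal p * (\<integral>\<^sup>+w. ennreal (dens \<alpha> w) * f (M * w) \<partial>lborel)
     + ennreal (1-p) * ((1/2) * f M + (1/2) * f (- M))"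
    using fM by (simp add: nn_integral_sym_pareto nn_integral_sym_delta)
  finally show ?thesis using False unfolding M_def p_def by simp
qed


lemma kp_meas:
  assumes f: "f \<in> borel_measurable borel"
  shows "(\<lambda>y. \<integral>\<^sup>+z. f z \<partial>kendall_pt \<alpha> x y) \<in> borel_measurable borel"
proof -
  have I: "(\<lambda>s. \<integral>\<^sup>+w. ennreal (dens \<alpha> w) * f (s * w) \<partial>lborel) \<in> borel_measurable borel"
    using f by measurable
  show ?thesis
    unfolding nn_integral_kendall_pt[OF f]
    using f I by measurable
qed


lemma kendall_pt_abs: "kendall_pt \<alpha> (-x) y = kendall_pt \<alpha> x y"
  unfolding kendall_pt_def by simp

lemma sym_delta_UNIV: "emeasure (sym_delta x) UNIV = 1"
proof -
  have "(1/2::ennreal) + 1/2 = (1+1)/2" by (simp only: add_divide_distrib_ennreal)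
  also have "\<dots> = 1" by (simp add: one_add_one)
  finally show ?thesis by (subst emeasure_sym_delta) auto
qed

lemma kstep_eq:
  "kstep \<alpha> \<nu> x = measure_of UNIV (sets borel) (\<lambda>A. \<integral>\<^sup>+y. emeasure (kendall_pt \<alpha> x y) A \<partial>\<nu>)"
  unfolding kstep_def kendall_conv_def
proof (rule measure_of_eq)
  fix A :: "real set" assume "A \<in> sigma_sets UNIV (sets borel)"
  have "(\<integral>\<^sup>+x'. \<integral>\<^sup>+y. emeasure (kendall_pt \<alpha> x' y) A \<partial>\<nu> \<partial>sym_delta x)
      = (\<integral>\<^sup>+x'. (\<integral>\<^sup>+y. emeasure (kendall_pt \<alpha> x y) A \<partial>\<nu>) \<partial>sym_delta x)"
    by (rule nn_integral_cong_AE) (use AE_sym_delta[of x] in \<open>auto simp: kendall_pt_abs\<close>)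
  also have "\<dots> = (\<integral>\<^sup>+y. emeasure (kendall_pt \<alpha> x y) A \<partial>\<nu>)"
    by (simp add: sym_delta_UNIV)
  finally show "(\<integral>\<^sup>+x'. \<integral>\<^sup>+y. emeasure (kendall_pt \<alpha> x' y) A \<partial>\<nu> \<partial>sym_delta x)
      = (\<integral>\<^sup>+y. emeasure (kendall_pt \<alpha> x y) A \<partial>\<nu>)" .
qed auto

lemma kp_emeas_meas:
  assumes sn: "sets \<nu> = sets borel" and A: "A \<in> sets borel"
  shows "(\<lambda>y. emeasure (kendall_pt \<alpha> x y) A) \<in> borel_measurable \<nu>"
proof -
  have "(\<lambda>y. \<integral>\<^sup>+z. indicator A z \<partial>kendall_pt \<alpha> x y) \<in> borel_measurable borel"
    using A by (intro kp_meas) auto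
  moreover have "\<And>y. (\<integral>\<^sup>+z. indicator A z \<partial>kendall_pt \<alpha> x y) = emeasure (kendall_pt \<alpha> x y) A"
    using A by (simp add: nn_integral_indicator)
  moreover have "measurable \<nu> (borel::ennreal measure) = borel_measurable borel"
    by (rule measurable_cong_sets; simp add: sn)
  ultimately show ?thesis by simp
qed

lemma sets_kstep[simp]: "sets (kstep \<alpha> \<nu> x) = sets borel"
  unfolding kstep_eq by (subst sets_measure_of) (auto simp: sig_borel)

lemma emeasure_kstep:
  assumes sn: "sets \<nu> = sets borel" and A: "A \<in> sets borel"
  shows "emeasure (kstep \<alpha> \<nu> x) A = (\<integral>\<^sup>+y. emeasure (kendall_pt \<alpha> x y) A \<partial>\<nu>)"
  unfolding kstep_eq
proof (rule emeasure_measure_of_sigma[OF _ _ _ A])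
  show "sigma_algebra UNIV (sets borel)"
    by (metis sets.sigma_algebra_axioms space_borel)
  show "positive (sets borel) (\<lambda>A. \<integral>\<^sup>+y. emeasure (kendall_pt \<alpha> x y) A \<partial>\<nu>)"
    by (simp add: positive_def)
  show "countably_additive (sets borel) (\<lambda>A. \<integral>\<^sup>+y. emeasure (kendall_pt \<alpha> x y) A \<partial>\<nu>)"
  proof (unfold countably_additive_def, intro allI impI)
    fix F :: "nat \<Rightarrow> real set"
    assume F: "range F \<subseteq> sets borel" "disjoint_family F" "\<Union> (range F) \<in> sets borel"
    have "(\<Sum>i. \<integral>\<^sup>+y. emeasure (kendall_pt \<alpha> x y) (F i) \<partial>\<nu>) = (\<integral>\<^sup>+y. (\<Sum>i. emeasure (kendall_pt \<alpha> x y) (F i)) \<partial>\<nu>)"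
      using F by (intro nn_integral_suminf[symmetric] kp_emeas_meas[OF sn]) auto
    also have "\<dots> = (\<integral>\<^sup>+y. emeasure (kendall_pt \<alpha> x y) (\<Union> (range F)) \<partial>\<nu>)"
      using F by (intro nn_integral_cong suminf_emeasure) auto
    finally show "(\<Sum>i. \<integral>\<^sup>+y. emeasure (kendall_pt \<alpha> x y) (F i) \<partial>\<nu>) = (\<integral>\<^sup>+y. emeasure (kendall_pt \<alpha> x y) (\<Union> (range F)) \<partial>\<nu>)" .
  qed
qed

lemma nn_integral_kstep:
  assumes sn: "sets \<nu> = sets borel" and f: "f \<in> borel_measurable borel"
  shows "(\<integral>\<^sup>+z. f z \<partial>kstep \<alpha> \<nu> x) = (\<integral>\<^sup>+y. (\<integral>\<^sup>+z. f z \<partial>kendall_pt \<alpha> x y) \<partial>\<nu>)"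
proof -
  have ms: "measurable (kstep \<alpha> \<nu> x) (borel::ennreal measure) = borel_measurable borel"
     "measurable \<nu> (borel::ennreal measure) = borel_measurable borel"
     "\<And>y. measurable (kendall_pt \<alpha> x y) (borel::ennreal measure) = borel_measurable borel"
    by (rule measurable_cong_sets; simp add: sn)+
  have km: "\<And>g. g \<in> borel_measurable borel \<Longrightarrow> (\<lambda>y. \<integral>\<^sup>+z. g z \<partial>kendall_pt \<alpha> x y) \<in> borel_measurable \<nu>"
    using kp_meas ms by auto
  show ?thesis using f
  proof (induction rule: borel_measurable_induct)
    case (cong f g)
    then show ?case by (simp add: cong)
  next
    case (set A)
    have "(\<integral>\<^sup>+z. indicator A z \<partial>kstep \<alpha> \<nu> x) = emeasure (kstep \<alpha> \<nu> x) A"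
      using set by (simp add: nn_integral_indicator)
    also have "\<dots> = (\<integral>\<^sup>+y. emeasure (kendall_pt \<alpha> x y) A \<partial>\<nu>)"
      by (rule emeasure_kstep[OF sn set])
    also have "\<dots> = (\<integral>\<^sup>+y. (\<integral>\<^sup>+z. indicator A z \<partial>kendall_pt \<alpha> x y) \<partial>\<nu>)"
      using set by (simp add: nn_integral_indicator)
    finally show ?case .
  next
    case (mult u c)
    have "(\<integral>\<^sup>+z. c * u z \<partial>kstep \<alpha> \<nu> x) = c * (\<integral>\<^sup>+z. u z \<partial>kstep \<alpha> \<nu> x)"
      using mult ms by (simp add: nn_integral_cmult)
    also have "\<dots> = c * (\<integral>\<^sup>+y. (\<integral>\<^sup>+z. u z \<partial>kendall_pt \<alpha> x y) \<partial>\<nu>)"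
      using mult by simp
    also have "\<dots> = (\<integral>\<^sup>+y. c * (\<integral>\<^sup>+z. u z \<partial>kendall_pt \<alpha> x y) \<partial>\<nu>)"
      using km[OF mult(2)] by (simp add: nn_integral_cmult)
    also have "\<dots> = (\<integral>\<^sup>+y. (\<integral>\<^sup>+z. c * u z \<partial>kendall_pt \<alpha> x y) \<partial>\<nu>)"
      using mult ms by (simp add: nn_integral_cmult)
    finally show ?case .
  next
    case (add u v)
    have "(\<integral>\<^sup>+z. v z + u z \<partial>kstep \<alpha> \<nu> x) = (\<integral>\<^sup>+z. v z \<partial>kstep \<alpha> \<nu> x) + (\<integral>\<^sup>+z. u z \<partial>kstep \<alpha> \<nu> x)"
      using add ms by (simp add: nn_integral_add)
    also have "\<dots> = (\<integral>\<^sup>+y. (\<integral>\<^sup>+z. v z \<partial>kendall_pt \<alpha> x y) \<partial>\<nu>) + (\<integral>\<^sup>+y. (\<integral>\<^sup>+z. u z \<partial>kendall_pt \<alpha> x y) \<partial>\<nu>)"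
      using add by simp
    also have "\<dots> = (\<integral>\<^sup>+y. (\<integral>\<^sup>+z. v z \<partial>kendall_pt \<alpha> x y) + (\<integral>\<^sup>+z. u z \<partial>kendall_pt \<alpha> x y) \<partial>\<nu>)"
      using km add by (simp add: nn_integral_add)
    also have "\<dots> = (\<integral>\<^sup>+y. (\<integral>\<^sup>+z. v z + u z \<partial>kendall_pt \<alpha> x y) \<partial>\<nu>)"
      using add ms by (simp add: nn_integral_add)
    finally show ?case .
  next
    case (seq U)
    have m1: "\<And>i. U i \<in> borel_measurable (kstep \<alpha> \<nu> x)" "\<And>i y. U i \<in> borel_measurable (kendall_pt \<alpha> x y)"
      using seq ms by auto
    have inc: "incseq (\<lambda>i y. \<integral>\<^sup>+z. U i z \<partial>kendall_pt \<alpha> x y)"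
      using \<open>incseq U\<close> by (auto simp: incseq_def le_fun_def intro!: nn_integral_mono)
    have "(\<integral>\<^sup>+z. (SUP i. U i) z \<partial>kstep \<alpha> \<nu> x) = (SUP i. \<integral>\<^sup>+z. U i z \<partial>kstep \<alpha> \<nu> x)"
      using m1 \<open>incseq U\<close> by (simp add: nn_integral_monotone_convergence_SUP[symmetric] image_comp)
    also have "\<dots> = (SUP i. \<integral>\<^sup>+y. (\<integral>\<^sup>+z. U i z \<partial>kendall_pt \<alpha> x y) \<partial>\<nu>)"
      using seq by simp
    also have "\<dots> = (\<integral>\<^sup>+y. (SUP i. \<integral>\<^sup>+z. U i z \<partial>kendall_pt \<alpha> x y) \<partial>\<nu>)"
      using inc km seq by (subst nn_integral_monotone_convergence_SUP) (auto simp: image_comp)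
    also have "\<dots> = (\<integral>\<^sup>+y. (\<integral>\<^sup>+z. (SUP i. U i) z \<partial>kendall_pt \<alpha> x y) \<partial>\<nu>)"
      using m1 \<open>incseq U\<close> by (simp add: nn_integral_monotone_convergence_SUP[symmetric] image_comp)
    finally show ?case .
  qed
qed



lemma lborel_sym:
  fixes f :: "real \<Rightarrow> real"
  assumes c: "1 \<le> c" and fi: "(f has_integral I) {1..c}" and fm: "f \<in> borel_measurable borel"
    and fnn: "\<And>w. 1 \<le> w \<Longrightarrow> w \<le> c \<Longrightarrow> 0 \<le> f w"
  shows "(\<integral>\<^sup>+w. ennreal (if 1 \<le> \<bar>w\<bar> \<and> \<bar>w\<bar> \<le> c then f \<bar>w\<bar> else 0) \<partial>lborel) = ennreal (2 * I)"
proof -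
  let ?S = "{-c..-1} \<union> {1..c::real}"
  have h1: "((\<lambda>w. f \<bar>w\<bar>) has_integral I) {1..c}"
    by (rule has_integral_eq[OF _ fi]) auto
  have "((\<lambda>w. f (-w)) has_integral I) {-c..-1}"
    using fi by simp
  then have h2: "((\<lambda>w. f \<bar>w\<bar>) has_integral I) {-c..-1}"
    by (rule has_integral_eq[rotated]) auto
  have "((\<lambda>w. f \<bar>w\<bar>) has_integral (I + I)) ?S"
    by (rule has_integral_Un[OF h2 h1]) (use c in auto)
  then have "((\<lambda>w. if w \<in> ?S then f \<bar>w\<bar> else 0) has_integral (I + I)) UNIV"
    by (rule has_integral_restrict_UNIV[THEN iffD2])
  then have "((\<lambda>w. if w \<in> ?S then f \<bar>w\<bar> else 0) has_integral (2 * I)) UNIV"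
    by (metis mult_2)
  moreover have "(\<lambda>w. if w \<in> ?S then f \<bar>w\<bar> else 0) = (\<lambda>w. if 1 \<le> \<bar>w\<bar> \<and> \<bar>w\<bar> \<le> c then f \<bar>w\<bar> else 0)"
    by (rule ext) auto
  ultimately have hi: "((\<lambda>w. if 1 \<le> \<bar>w\<bar> \<and> \<bar>w\<bar> \<le> c then f \<bar>w\<bar> else 0) has_integral (2 * I)) UNIV"
    by simp
  show ?thesis
    by (rule nn_integral_has_integral_lborel[OF _ _ hi]) (use fm fnn in auto)
qed

lemma powr_int1:
  fixes \<alpha> c :: real
  assumes "\<alpha> > 0" "1 \<le> c"
  shows "((\<lambda>w. \<alpha> * w powr (-2*\<alpha>-1) - \<alpha> * c powr (-\<alpha>) * w powr (-\<alpha>-1)) has_integral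
     ((-(1/2) * c powr (-2*\<alpha>) + c powr (-\<alpha>) * c powr (-\<alpha>)) - (-(1/2) * 1 powr (-2*\<alpha>) + c powr (-\<alpha>) * 1 powr (-\<alpha>)))) {1..c}"
proof (rule fundamental_theorem_of_calculus)
  fix x assume x: "x \<in> {1..c}"
  then have "x > 0" by auto
  show "((\<lambda>w. -(1/2) * w powr (-2*\<alpha>) + c powr (-\<alpha>) * w powr (-\<alpha>)) has_vector_derivative
     (\<alpha> * x powr (-2*\<alpha>-1) - \<alpha> * c powr (-\<alpha>) * x powr (-\<alpha>-1))) (at x within {1..c})"
    unfolding has_real_derivative_iff_has_vector_derivative[symmetric]
    using \<open>x > 0\<close>
    by (auto intro!: derivative_eq_intros has_real_derivative_powr simp: algebra_simps)
qed (use assms in auto)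

lemma powr_int2:
  fixes \<alpha> c :: real
  assumes "\<alpha> > 0" "1 \<le> c"
  shows "((\<lambda>w. \<alpha> * c powr (-\<alpha>) * w powr (-\<alpha>-1)) has_integral
     ((-(c powr (-\<alpha>)) * c powr (-\<alpha>)) - (-(c powr (-\<alpha>)) * 1 powr (-\<alpha>)))) {1..c}"
proof (rule fundamental_theorem_of_calculus)
  fix x assume x: "x \<in> {1..c}"
  then have "x > 0" by auto
  show "((\<lambda>w. -(c powr (-\<alpha>)) * w powr (-\<alpha>)) has_vector_derivative
     (\<alpha> * c powr (-\<alpha>) * x powr (-\<alpha>-1))) (at x within {1..c})"
    unfolding has_real_derivative_iff_has_vector_derivative[symmetric]
    using \<open>x > 0\<close>
    by (auto intro!: derivative_eq_intros has_real_derivative_powr simp: algebra_simps)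
qed (use assms in auto)



lemma powr_id1:
  fixes \<alpha> c w :: real assumes "c > 0" "w > 0"
  shows "w powr (-2*\<alpha>-1) * (w / c) powr \<alpha> = c powr (-\<alpha>) * w powr (-\<alpha>-1)"
proof -
  have "w powr (-2*\<alpha>-1) * (w / c) powr \<alpha> = w powr (-2*\<alpha>-1) * w powr \<alpha> * c powr (-\<alpha>)"
  proof -
    have "(w / c) powr \<alpha> = w powr \<alpha> / c powr \<alpha>" using assms by (simp add: powr_divide)
    also have "\<dots> = w powr \<alpha> * c powr (-\<alpha>)" by (simp add: powr_minus divide_inverse)
    finally show ?thesis by simp
  qed
  also have "w powr (-2*\<alpha>-1) * w powr \<alpha> = w powr (-\<alpha>-1)"
    by (simp add: powr_add[symmetric])
  finally show ?thesis by simp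
qed

lemma lb1:
  fixes \<alpha> c :: real assumes a: "\<alpha> > 0" and c: "c > 1"
  shows "(\<integral>\<^sup>+w. ennreal (dens \<alpha> w * (if \<bar>w\<bar> < c then 1 - (\<bar>w\<bar>/c) powr \<alpha> else 0)) \<partial>lborel)
     = ennreal ((1 - c powr (-\<alpha>))^2)"
proof -
  define f1 where "f1 w = \<alpha> * w powr (-2*\<alpha>-1) - \<alpha> * c powr (-\<alpha>) * w powr (-\<alpha>-1)" for w
  have fi: "(f1 has_integral ((-(1/2) * c powr (-2*\<alpha>) + c powr (-\<alpha>) * c powr (-\<alpha>)) - (-(1/2) * 1 powr (-2*\<alpha>) + c powr (-\<alpha>) * 1 powr (-\<alpha>)))) {1..c}"
    unfolding f1_def using powr_int1[OF a] c by simp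
  have f1e: "f1 w = \<alpha> * w powr (-2*\<alpha>-1) * (1 - (w/c) powr \<alpha>)" if "w > 0" for w
    unfolding f1_def using powr_id1[of c w \<alpha>] that c by (simp add: algebra_simps)
  have fnn: "0 \<le> f1 w" if "1 \<le> w" "w \<le> c" for w
  proof -
    have "(w/c) powr \<alpha> \<le> 1" using that a c by (simp add: powr_le1)
    then show ?thesis using f1e[of w] that a by simp
  qed
  have fm: "f1 \<in> borel_measurable borel" unfolding f1_def by measurable
  have "(\<integral>\<^sup>+w. ennreal (dens \<alpha> w * (if \<bar>w\<bar> < c then 1 - (\<bar>w\<bar>/c) powr \<alpha> else 0)) \<partial>lborel)
      = (\<integral>\<^sup>+w. ennreal (if 1 \<le> \<bar>w\<bar> \<and> \<bar>w\<bar> \<le> c then f1 \<bar>w\<bar> else 0) \<partial>lborel)"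
  proof (rule nn_integral_cong)
    fix w :: real
    show "ennreal (dens \<alpha> w * (if \<bar>w\<bar> < c then 1 - (\<bar>w\<bar>/c) powr \<alpha> else 0))
       = ennreal (if 1 \<le> \<bar>w\<bar> \<and> \<bar>w\<bar> \<le> c then f1 \<bar>w\<bar> else 0)"
    proof (cases "1 \<le> \<bar>w\<bar> \<and> \<bar>w\<bar> \<le> c")
      case True
      then show ?thesis using f1e[of "\<bar>w\<bar>"] c by (auto simp: dens_def)
    next
      case False
      then show ?thesis by (auto simp: dens_def)
    qed
  qed
  also have "\<dots> = ennreal (2 * ((-(1/2) * c powr (-2*\<alpha>) + c powr (-\<alpha>) * c powr (-\<alpha>)) - (-(1/2) * 1 powr (-2*\<alpha>) + c powr (-\<alpha>) * 1 powr (-\<alpha>))))"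
    by (rule lborel_sym[OF _ fi fm fnn]) (use c in auto)
  also have "\<dots> = ennreal ((1 - c powr (-\<alpha>))^2)"
  proof -
    have "c powr (-2*\<alpha>) = c powr (-\<alpha>) * c powr (-\<alpha>)"
      by (simp add: powr_add[symmetric])
    then show ?thesis by (simp add: power2_eq_square algebra_simps)
  qed
  finally show ?thesis .
qed

lemma lb2:
  fixes \<alpha> c :: real assumes a: "\<alpha> > 0" and c: "c > 1"
  shows "(\<integral>\<^sup>+w. ennreal (dens \<alpha> w * (if \<bar>w\<bar> < c then (\<bar>w\<bar>/c) powr \<alpha> else 0)) \<partial>lborel)
     = ennreal (2 * c powr (-\<alpha>) * (1 - c powr (-\<alpha>)))"
proof -
  define f2 where "f2 w = \<alpha> * c powr (-\<alpha>) * w powr (-\<alpha>-1)" for w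
  have fi: "(f2 has_integral ((-(c powr (-\<alpha>)) * c powr (-\<alpha>)) - (-(c powr (-\<alpha>)) * 1 powr (-\<alpha>)))) {1..c}"
    unfolding f2_def using powr_int2[OF a] c by simp
  have f2e: "f2 w = \<alpha> * w powr (-2*\<alpha>-1) * (w/c) powr \<alpha>" if "w > 0" for w
    unfolding f2_def using powr_id1[of c w \<alpha>] that c by (simp add: algebra_simps)
  have fnn: "0 \<le> f2 w" if "1 \<le> w" "w \<le> c" for w
    unfolding f2_def using a by simp
  have fm: "f2 \<in> borel_measurable borel" unfolding f2_def by measurable
  have "(\<integral>\<^sup>+w. ennreal (dens \<alpha> w * (if \<bar>w\<bar> < c then (\<bar>w\<bar>/c) powr \<alpha> else 0)) \<partial>lborel)
      = (\<integral>\<^sup>+w. ennreal (if 1 \<le> \<bar>w\<bar> \<and> \<bar>w\<bar> \<le> c then f2 \<bar>w\<bar> else 0) \<partial>lborel)"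
  proof (rule nn_integral_cong_AE)
    have "AE w in lborel. w \<noteq> c" "AE w in lborel. w \<noteq> -c" by (rule AE_lborel_singleton)+
    then show "AE w in lborel. ennreal (dens \<alpha> w * (if \<bar>w\<bar> < c then (\<bar>w\<bar>/c) powr \<alpha> else 0))
       = ennreal (if 1 \<le> \<bar>w\<bar> \<and> \<bar>w\<bar> \<le> c then f2 \<bar>w\<bar> else 0)"
    proof eventually_elim
      case (elim w)
      show ?case
      proof (cases "1 \<le> \<bar>w\<bar> \<and> \<bar>w\<bar> \<le> c")
        case True
        then have "\<bar>w\<bar> < c" using elim by auto
        then show ?thesis using True f2e[of "\<bar>w\<bar>"] c by (auto simp: dens_def)
      next
        case False
        then show ?thesis by (auto simp: dens_def)
      qed
    qed
  qed
  also have "\<dots> = ennreal (2 * ((-(c powr (-\<alpha>)) * c powr (-\<alpha>)) - (-(c powr (-\<alpha>)) * 1 powr (-\<alpha>))))"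
    by (rule lborel_sym[OF _ fi fm fnn]) (use c in auto)
  also have "\<dots> = ennreal (2 * c powr (-\<alpha>) * (1 - c powr (-\<alpha>)))"
    by (simp add: algebra_simps)
  finally show ?thesis .
qed


definition g1 :: "real \<Rightarrow> real \<Rightarrow> real \<Rightarrow> real" where
  "g1 \<alpha> a z = (if \<bar>z\<bar> < a then 1 - (\<bar>z\<bar>/a) powr \<alpha> else 0)"
definition g2 :: "real \<Rightarrow> real \<Rightarrow> real \<Rightarrow> real" where
  "g2 \<alpha> a z = (if \<bar>z\<bar> < a then (\<bar>z\<bar>/a) powr \<alpha> else 0)"

lemma g1_meas[measurable]: "g1 \<alpha> a \<in> borel_measurable borel"
  unfolding g1_def by measurable
lemma g2_meas[measurable]: "g2 \<alpha> a \<in> borel_measurable borel"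
  unfolding g2_def by measurable

lemma g1_nonneg: "0 < a \<Longrightarrow> 0 < \<alpha> \<Longrightarrow> 0 \<le> g1 \<alpha> a z"
  unfolding g1_def by (auto simp: powr_le1)
lemma g2_nonneg: "0 \<le> g2 \<alpha> a z"
  unfolding g2_def by auto

lemma g1_abs: "g1 \<alpha> a \<bar>z\<bar> = g1 \<alpha> a z" "g1 \<alpha> a (-z) = g1 \<alpha> a z"
  unfolding g1_def by auto
lemma g2_abs: "g2 \<alpha> a \<bar>z\<bar> = g2 \<alpha> a z" "g2 \<alpha> a (-z) = g2 \<alpha> a z"
  unfolding g2_def by auto

lemma half_half: "(1/2) * (X::ennreal) + (1/2) * X = X"
proof -
  have "(1/2::ennreal) + 1/2 = (1+1)/2" by (simp only: add_divide_distrib_ennreal)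
  also have "\<dots> = 1" by (simp add: one_add_one)
  finally have "(1/2::ennreal) + 1/2 = 1" .
  then show ?thesis by (metis distrib_right mult_1)
qed

lemma ennreal_comb:
  fixes p A B :: real
  assumes "0 \<le> p" "p \<le> 1" "0 \<le> A" "0 \<le> B"
  shows "ennreal p * ennreal A + ennreal (1-p) * ((1/2) * ennreal B + (1/2) * ennreal B) = ennreal (p*A + (1-p)*B)"
proof -
  have "ennreal p * ennreal A + ennreal (1-p) * ((1/2) * ennreal B + (1/2) * ennreal B)
      = ennreal p * ennreal A + ennreal (1-p) * ennreal B" by (simp only: half_half)
  also have "\<dots> = ennreal (p*A) + ennreal ((1-p)*B)"
    using assms by (simp only: ennreal_mult)
  also have "\<dots> = ennreal (p*A + (1-p)*B)"
    by (rule ennreal_plus[symmetric]) (use assms in auto)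
  finally show ?thesis .
qed

lemma powr_flip: "0 < M \<Longrightarrow> 0 < a \<Longrightarrow> (a/M) powr (-\<alpha>) = (M/a) powr (\<alpha>::real)"
proof -
  assume h: "0 < M" "0 < a"
  have "(a/M) powr (-\<alpha>) = inverse ((a/M) powr \<alpha>)" by (rule powr_minus)
  also have "\<dots> = inverse (a powr \<alpha> / M powr \<alpha>)" using h by (simp add: powr_divide)
  also have "\<dots> = M powr \<alpha> / a powr \<alpha>" by simp
  also have "\<dots> = (M/a) powr \<alpha>" using h by (simp add: powr_divide)
  finally show ?thesis .
qed

lemma kp_zero_part:
  fixes g :: "real \<Rightarrow> real"
  assumes "a \<le> M" "0 < M" and g0: "\<And>z. a \<le> \<bar>z\<bar> \<Longrightarrow> g z = 0"
  shows "(\<integral>\<^sup>+w. ennreal (dens \<alpha> w) * ennreal (g (M * w)) \<partial>lborel) = 0"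
proof -
  have zw: "\<And>w. ennreal (dens \<alpha> w) * ennreal (g (M * w)) = 0"
  proof -
    fix w
    show "ennreal (dens \<alpha> w) * ennreal (g (M * w)) = 0"
    proof (cases "1 \<le> \<bar>w\<bar>")
      case True
      then have "M * 1 \<le> M * \<bar>w\<bar>" using assms by (intro mult_left_mono) auto
      then have "a \<le> M * \<bar>w\<bar>" using assms(1) by linarith
      then have "a \<le> \<bar>M * w\<bar>" using assms by (simp add: abs_mult)
      then show ?thesis using g0 by simp
    next
      case False
      then show ?thesis by (simp add: dens_def)
    qed
  qed
  have "(\<integral>\<^sup>+w. ennreal (dens \<alpha> w) * ennreal (g (M * w)) \<partial>lborel) = (\<integral>\<^sup>+w. 0 \<partial>(lborel::real measure))"
  proof (rule nn_integral_cong)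
    fix w :: real show "ennreal (dens \<alpha> w) * ennreal (g (M * w)) = 0" by (rule zw)
  qed
  then show ?thesis by simp
qed


lemma dens_nonneg: "0 \<le> \<alpha> \<Longrightarrow> 0 \<le> dens \<alpha> w"
  unfolding dens_def by auto

lemma g1_scale: "0 < M \<Longrightarrow> g1 \<alpha> a (M * w) = (if \<bar>w\<bar> < a/M then 1 - (\<bar>w\<bar>/(a/M)) powr \<alpha> else 0)"
  unfolding g1_def by (simp add: abs_mult pos_less_divide_eq mult.commute)
lemma g2_scale: "0 < M \<Longrightarrow> g2 \<alpha> a (M * w) = (if \<bar>w\<bar> < a/M then (\<bar>w\<bar>/(a/M)) powr \<alpha> else 0)"
  unfolding g2_def by (simp add: abs_mult pos_less_divide_eq mult.commute)

lemma lbM1: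
  assumes a: "0 < \<alpha>" and M: "0 < M" "M < a"
  shows "(\<integral>\<^sup>+w. ennreal (dens \<alpha> w) * ennreal (g1 \<alpha> a (M * w)) \<partial>lborel) = ennreal ((1 - (M/a) powr \<alpha>)^2)"
proof -
  have "(\<integral>\<^sup>+w. ennreal (dens \<alpha> w) * ennreal (g1 \<alpha> a (M * w)) \<partial>lborel)
     = (\<integral>\<^sup>+w. ennreal (dens \<alpha> w * (if \<bar>w\<bar> < a/M then 1 - (\<bar>w\<bar>/(a/M)) powr \<alpha> else 0)) \<partial>lborel)"
    using M a by (intro nn_integral_cong) (simp add: g1_scale ennreal_mult'[symmetric] dens_nonneg)
  also have "\<dots> = ennreal ((1 - (a/M) powr (-\<alpha>))^2)"
    using M by (intro lb1 a) simp
  also have "(a/M) powr (-\<alpha>) = (M/a) powr \<alpha>" using M by (intro powr_flip) auto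
  finally show ?thesis .
qed

lemma lbM2:
  assumes a: "0 < \<alpha>" and M: "0 < M" "M < a"
  shows "(\<integral>\<^sup>+w. ennreal (dens \<alpha> w) * ennreal (g2 \<alpha> a (M * w)) \<partial>lborel) = ennreal (2 * (M/a) powr \<alpha> * (1 - (M/a) powr \<alpha>))"
proof -
  have "(\<integral>\<^sup>+w. ennreal (dens \<alpha> w) * ennreal (g2 \<alpha> a (M * w)) \<partial>lborel)
     = (\<integral>\<^sup>+w. ennreal (dens \<alpha> w * (if \<bar>w\<bar> < a/M then (\<bar>w\<bar>/(a/M)) powr \<alpha> else 0)) \<partial>lborel)"
    using M a by (intro nn_integral_cong) (simp add: g2_scale ennreal_mult'[symmetric] dens_nonneg)
  also have "\<dots> = ennreal (2 * (a/M) powr (-\<alpha>) * (1 - (a/M) powr (-\<alpha>)))"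
    using M by (intro lb2 a) simp
  also have "(a/M) powr (-\<alpha>) = (M/a) powr \<alpha>" using M by (intro powr_flip) auto
  finally show ?thesis .
qed


lemma powr_split3: "0 \<le> m \<Longrightarrow> 0 < M \<Longrightarrow> 0 < a \<Longrightarrow> (m/a) powr \<alpha> = (m/M) powr \<alpha> * (M/a) powr (\<alpha>::real)"
proof -
  assume h: "0 \<le> m" "0 < M" "0 < a"
  have "m/a = (m/M) * (M/a)" using h by simp
  then have "(m/a) powr \<alpha> = ((m/M) * (M/a)) powr \<alpha>" by (rule arg_cong)
  also have "\<dots> = (m/M) powr \<alpha> * (M/a) powr \<alpha>"
    by (rule powr_mult; use h in simp)
  finally show ?thesis .
qed

lemma K_common:
  fixes x y :: real
  assumes a: "0 < a" and al: "0 < \<alpha>"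
  defines "M \<equiv> max \<bar>x\<bar> \<bar>y\<bar>" and "m \<equiv> min \<bar>x\<bar> \<bar>y\<bar>"
  shows "g1 \<alpha> a x * g1 \<alpha> a y = g1 \<alpha> a M * g1 \<alpha> a m"
    and "g2 \<alpha> a x * g1 \<alpha> a y + g1 \<alpha> a x * g2 \<alpha> a y = g2 \<alpha> a M * g1 \<alpha> a m + g1 \<alpha> a M * g2 \<alpha> a m"
  unfolding M_def m_def
  by (cases "\<bar>x\<bar> \<le> \<bar>y\<bar>"; simp add: max_def min_def g1_abs g2_abs algebra_simps)+

lemma K1:
  assumes a: "0 < a" and al: "0 < \<alpha>"
  shows "(\<integral>\<^sup>+z. ennreal (g1 \<alpha> a z) \<partial>kendall_pt \<alpha> x y) = ennreal (g1 \<alpha> a x * g1 \<alpha> a y)" (is "_ = ennreal ?r")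
proof -
  define M where "M = max \<bar>x\<bar> \<bar>y\<bar>"
  define m where "m = min \<bar>x\<bar> \<bar>y\<bar>"
  define p where "p = (m / M) powr \<alpha>"
  have mM: "0 \<le> m" "m \<le> M" unfolding m_def M_def by auto
  have eq: "g1 \<alpha> a x * g1 \<alpha> a y = g1 \<alpha> a M * g1 \<alpha> a m"
    unfolding M_def m_def by (rule K_common(1)[OF a al])
  have L: "(\<integral>\<^sup>+z. ennreal (g1 \<alpha> a z) \<partial>kendall_pt \<alpha> x y) =
    (if M = 0 then ennreal (g1 \<alpha> a 0) else
     ennreal p * (\<integral>\<^sup>+w. ennreal (dens \<alpha> w) * ennreal (g1 \<alpha> a (M * w)) \<partial>lborel)
     + ennreal (1 - p) * ((1/2) * ennreal (g1 \<alpha> a M) + (1/2) * ennreal (g1 \<alpha> a (- M))))"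
    unfolding M_def m_def p_def by (rule nn_integral_kendall_pt) measurable
  show ?thesis
  proof (cases "M = 0")
    case True
    then have "m = 0" using mM by simp
    then show ?thesis using True L eq by (simp add: g1_def)
  next
    case False
    then have Mp: "0 < M" using mM by simp
    have p01: "0 \<le> p" "p \<le> 1" unfolding p_def using mM Mp al by (auto intro!: powr_le1 simp: divide_le_eq_1)
    show ?thesis
    proof (cases "a \<le> M")
      case True
      have z: "\<And>z. a \<le> \<bar>z\<bar> \<Longrightarrow> g1 \<alpha> a z = 0" by (simp add: g1_def)
      have "g1 \<alpha> a M = 0" "g1 \<alpha> a (-M) = 0" "g1 \<alpha> a M = 0" using True Mp by (auto simp: g1_def)
      then have z1: "(\<integral>\<^sup>+z. ennreal (g1 \<alpha> a z) \<partial>kendall_pt \<alpha> x y) = 0"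
        using L False kp_zero_part[where g="g1 \<alpha> a" and \<alpha>=\<alpha>, OF True Mp z] by simp
      have z2: "?r = 0" using eq \<open>g1 \<alpha> a M = 0\<close> \<open>g1 \<alpha> a M = 0\<close> by simp
      show ?thesis unfolding z1 z2 by simp
    next
      case False
      then have Ma: "M < a" by simp
      define t where "t = (M/a) powr \<alpha>"
      have t01: "0 \<le> t" "t \<le> 1" unfolding t_def using Ma Mp a al by (auto intro!: powr_le1 simp: divide_le_eq_1)
      have gM: "g1 \<alpha> a M = 1 - t" "g1 \<alpha> a (-M) = 1 - t" using Ma Mp unfolding g1_def t_def by auto
      have gm: "g1 \<alpha> a m = 1 - p * t" using Ma mM Mp unfolding g1_def t_def p_def
        by (auto simp: powr_split3[of m M a \<alpha>] a)
      have "(\<integral>\<^sup>+z. ennreal (g1 \<alpha> a z) \<partial>kendall_pt \<alpha> x y)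
          = ennreal p * ennreal ((1 - t)^2) + ennreal (1 - p) * ((1/2) * ennreal (1 - t) + (1/2) * ennreal (1 - t))"
        using L \<open>M \<noteq> 0\<close> lbM1[OF al Mp Ma] gM unfolding t_def by simp
      also have "\<dots> = ennreal (p * (1-t)^2 + (1-p) * (1-t))"
        by (rule ennreal_comb) (use p01 t01 in auto)
      also have "p * (1-t)^2 + (1-p) * (1-t) = g1 \<alpha> a x * g1 \<alpha> a y"
        unfolding eq gM gm by (simp add: power2_eq_square algebra_simps)
      finally show ?thesis .
    qed
  qed
qed

lemma K2:
  assumes a: "0 < a" and al: "0 < \<alpha>"
  shows "(\<integral>\<^sup>+z. ennreal (g2 \<alpha> a z) \<partial>kendall_pt \<alpha> x y) = ennreal (g2 \<alpha> a x * g1 \<alpha> a y + g1 \<alpha> a x * g2 \<alpha> a y)" (is "_ = ennreal ?r")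
proof -
  define M where "M = max \<bar>x\<bar> \<bar>y\<bar>"
  define m where "m = min \<bar>x\<bar> \<bar>y\<bar>"
  define p where "p = (m / M) powr \<alpha>"
  have mM: "0 \<le> m" "m \<le> M" unfolding m_def M_def by auto
  have eq: "g2 \<alpha> a x * g1 \<alpha> a y + g1 \<alpha> a x * g2 \<alpha> a y = g2 \<alpha> a M * g1 \<alpha> a m + g1 \<alpha> a M * g2 \<alpha> a m"
    unfolding M_def m_def by (rule K_common(2)[OF a al])
  have L: "(\<integral>\<^sup>+z. ennreal (g2 \<alpha> a z) \<partial>kendall_pt \<alpha> x y) =
    (if M = 0 then ennreal (g2 \<alpha> a 0) else
     ennreal p * (\<integral>\<^sup>+w. ennreal (dens \<alpha> w) * ennreal (g2 \<alpha> a (M * w)) \<partial>lborel)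
     + ennreal (1 - p) * ((1/2) * ennreal (g2 \<alpha> a M) + (1/2) * ennreal (g2 \<alpha> a (- M))))"
    unfolding M_def m_def p_def by (rule nn_integral_kendall_pt) measurable
  show ?thesis
  proof (cases "M = 0")
    case True
    then have "m = 0" using mM by simp
    then show ?thesis using True L eq al by (simp add: g1_def g2_def)
  next
    case False
    then have Mp: "0 < M" using mM by simp
    have p01: "0 \<le> p" "p \<le> 1" unfolding p_def using mM Mp al by (auto intro!: powr_le1 simp: divide_le_eq_1)
    show ?thesis
    proof (cases "a \<le> M")
      case True
      have z: "\<And>z. a \<le> \<bar>z\<bar> \<Longrightarrow> g2 \<alpha> a z = 0" by (simp add: g2_def)
      have "g2 \<alpha> a M = 0" "g2 \<alpha> a (-M) = 0" "g1 \<alpha> a M = 0" using True Mp by (auto simp: g1_def g2_def)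
      then have z1: "(\<integral>\<^sup>+z. ennreal (g2 \<alpha> a z) \<partial>kendall_pt \<alpha> x y) = 0"
        using L False kp_zero_part[where g="g2 \<alpha> a" and \<alpha>=\<alpha>, OF True Mp z] by simp
      have z2: "?r = 0" using eq \<open>g1 \<alpha> a M = 0\<close> \<open>g2 \<alpha> a M = 0\<close> by simp
      show ?thesis unfolding z1 z2 by simp
    next
      case False
      then have Ma: "M < a" by simp
      define t where "t = (M/a) powr \<alpha>"
      have t01: "0 \<le> t" "t \<le> 1" unfolding t_def using Ma Mp a al by (auto intro!: powr_le1 simp: divide_le_eq_1)
      have gM: "g1 \<alpha> a M = 1 - t" "g2 \<alpha> a M = t" "g2 \<alpha> a (-M) = t" using Ma Mp unfolding g1_def g2_def t_def by auto
      have gm: "g1 \<alpha> a m = 1 - p * t" "g2 \<alpha> a m = p * t" using Ma mM Mp unfolding g1_def g2_def t_def p_def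
        by (auto simp: powr_split3[of m M a \<alpha>] a)
      have "(\<integral>\<^sup>+z. ennreal (g2 \<alpha> a z) \<partial>kendall_pt \<alpha> x y)
          = ennreal p * ennreal (2 * t * (1 - t)) + ennreal (1 - p) * ((1/2) * ennreal t + (1/2) * ennreal t)"
        using L \<open>M \<noteq> 0\<close> lbM2[OF al Mp Ma] gM unfolding t_def by simp
      also have "\<dots> = ennreal (p * (2 * t * (1 - t)) + (1-p) * t)"
        by (rule ennreal_comb) (use p01 t01 in auto)
      also have "p * (2 * t * (1 - t)) + (1-p) * t = g2 \<alpha> a x * g1 \<alpha> a y + g1 \<alpha> a x * g2 \<alpha> a y"
        unfolding eq gM gm by (simp add: algebra_simps)
      finally show ?thesis .
    qed
  qed
qed


lemma LIN:
  assumes sN: "sets N = sets borel" and c: "0 \<le> c1" "0 \<le> c2" and a: "0 < a" and al: "0 < \<alpha>"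
  shows "(\<integral>\<^sup>+y. ennreal (c1 * g1 \<alpha> a y + c2 * g2 \<alpha> a y) \<partial>N)
     = ennreal c1 * (\<integral>\<^sup>+y. ennreal (g1 \<alpha> a y) \<partial>N) + ennreal c2 * (\<integral>\<^sup>+y. ennreal (g2 \<alpha> a y) \<partial>N)"
proof -
  have m: "(\<lambda>y. ennreal (g1 \<alpha> a y)) \<in> borel_measurable N" "(\<lambda>y. ennreal (g2 \<alpha> a y)) \<in> borel_measurable N"
  proof -
    have "measurable N (borel::ennreal measure) = borel_measurable borel"
      by (rule measurable_cong_sets; simp add: sN)
    then show "(\<lambda>y. ennreal (g1 \<alpha> a y)) \<in> borel_measurable N" "(\<lambda>y. ennreal (g2 \<alpha> a y)) \<in> borel_measurable N"
      by simp_all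
  qed
  have "(\<integral>\<^sup>+y. ennreal (c1 * g1 \<alpha> a y + c2 * g2 \<alpha> a y) \<partial>N)
      = (\<integral>\<^sup>+y. ennreal c1 * ennreal (g1 \<alpha> a y) + ennreal c2 * ennreal (g2 \<alpha> a y) \<partial>N)"
  proof (rule nn_integral_cong)
    fix y
    have "0 \<le> g1 \<alpha> a y" "0 \<le> g2 \<alpha> a y" using g1_nonneg[OF a al] g2_nonneg by auto
    then show "ennreal (c1 * g1 \<alpha> a y + c2 * g2 \<alpha> a y) = ennreal c1 * ennreal (g1 \<alpha> a y) + ennreal c2 * ennreal (g2 \<alpha> a y)"
      using c by (simp only: ennreal_plus mult_nonneg_nonneg ennreal_mult)
  qed
  also have "\<dots> = ennreal c1 * (\<integral>\<^sup>+y. ennreal (g1 \<alpha> a y) \<partial>N) + ennreal c2 * (\<integral>\<^sup>+y. ennreal (g2 \<alpha> a y) \<partial>N)"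
    using m by (simp add: nn_integral_add nn_integral_cmult)
  finally show ?thesis .
qed


lemma Psi_g1: "0 < a \<Longrightarrow> 0 < \<alpha> \<Longrightarrow> Psi \<alpha> (x / a) = g1 \<alpha> a x"
proof -
  assume a: "0 < a" and al: "0 < \<alpha>"
  have e: "\<bar>x / a\<bar> = \<bar>x\<bar> / a" using a by simp
  show ?thesis
  proof (cases "\<bar>x\<bar> < a")
    case True
    then have "(\<bar>x\<bar> / a) powr \<alpha> \<le> 1" using a al by (auto intro!: powr_le1)
    then show ?thesis using True unfolding Psi_def g1_def e by simp
  next
    case False
    then have "1 \<le> (\<bar>x\<bar> / a) powr \<alpha>" using a al by (auto intro!: ge_one_powr_ge_zero)
    then show ?thesis using False unfolding Psi_def g1_def e by simp
  qed
qed

lemma nu_G: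
  assumes P: "prob_space \<nu>" and sn: "sets \<nu> = sets borel" and a: "0 < a" and al: "0 < \<alpha>"
  shows "(\<integral>\<^sup>+y. ennreal (g1 \<alpha> a y) \<partial>\<nu>) = ennreal (GG \<alpha> \<nu> a)" and "0 \<le> GG \<alpha> \<nu> a"
proof -
  interpret prob_space \<nu> by (rule P)
  have ms: "measurable \<nu> (borel::real measure) = borel_measurable borel"
    by (rule measurable_cong_sets; simp add: sn)
  have mg: "g1 \<alpha> a \<in> borel_measurable \<nu>" using ms by simp
  have b: "norm (g1 \<alpha> a y) \<le> 1" for y
  proof -
    have "0 \<le> g1 \<alpha> a y" by (rule g1_nonneg[OF a al])
    moreover have "g1 \<alpha> a y \<le> 1" unfolding g1_def by auto
    ultimately show ?thesis by simp
  qed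
  have int: "integrable \<nu> (g1 \<alpha> a)"
    by (rule integrable_const_bound[where B=1]) (use b mg in auto)
  have GG: "GG \<alpha> \<nu> a = (\<integral>y. g1 \<alpha> a y \<partial>\<nu>)"
    unfolding GG_def using Psi_g1[OF a al] by simp
  show "(\<integral>\<^sup>+y. ennreal (g1 \<alpha> a y) \<partial>\<nu>) = ennreal (GG \<alpha> \<nu> a)"
    unfolding GG using int g1_nonneg[OF a al] by (intro nn_integral_eq_integral) auto
  show "0 \<le> GG \<alpha> \<nu> a" unfolding GG using g1_nonneg[OF a al] by (intro integral_nonneg_AE) auto
qed

lemma nu_H:
  assumes P: "prob_space \<nu>" and sn: "sets \<nu> = sets borel" and a: "0 < a" and al: "0 < \<alpha>"
    and sym: "distr \<nu> borel uminus = \<nu>" and na: "emeasure \<nu> {a} = 0"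
  shows "(\<integral>\<^sup>+y. ennreal (g2 \<alpha> a y) \<partial>\<nu>) = ennreal (HH \<alpha> \<nu> a)" and "0 \<le> HH \<alpha> \<nu> a"
proof -
  interpret prob_space \<nu> by (rule P)
  have ms: "measurable \<nu> (borel::real measure) = borel_measurable borel"
    by (rule measurable_cong_sets; simp add: sn)
  have sp: "space \<nu> = UNIV" using sets_eq_imp_space_eq[OF sn] by simp
  have nma: "emeasure \<nu> {-a} = 0"
  proof -
    have "emeasure \<nu> {-a} = emeasure (distr \<nu> borel uminus) {-a}" using sym by simp
    also have "\<dots> = emeasure \<nu> (uminus -` {-a} \<inter> space \<nu>)"
      by (rule emeasure_distr) (auto simp: ms)
    also have "uminus -` {-a} \<inter> space \<nu> = {a}" by (auto simp: sp)
    finally show ?thesis using na by simp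
  qed
  define h where "h y = indicator {-a..a} y * \<bar>y\<bar> powr \<alpha>" for y :: real
  have mh: "h \<in> borel_measurable \<nu>" unfolding h_def using ms by simp
  have hb: "\<And>y. norm (h y) \<le> a powr \<alpha>" unfolding h_def using a al
    by (auto simp: indicator_def intro!: powr_mono2)
  have int: "integrable \<nu> (\<lambda>y. a powr (-\<alpha>) * h y)"
    by (rule integrable_mult_right, rule integrable_const_bound[where B="a powr \<alpha>"]) (use hb mh in auto)
  have HH: "HH \<alpha> \<nu> a = (\<integral>y. a powr (-\<alpha>) * h y \<partial>\<nu>)"
    unfolding HH_def h_def by simp
  have ae1: "AE y in \<nu>. y \<noteq> a" by (rule AE_I[where N="{a}"]) (use na sn in auto)
  have ae2: "AE y in \<nu>. y \<noteq> -a" by (rule AE_I[where N="{-a}"]) (use nma sn in auto)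
  have eq: "g2 \<alpha> a y = a powr (-\<alpha>) * h y" if "y \<noteq> a" "y \<noteq> -a" for y
  proof (cases "\<bar>y\<bar> < a")
    case True
    then have "y \<in> {-a..a}" by auto
    moreover have "(\<bar>y\<bar> / a) powr \<alpha> = a powr (-\<alpha>) * \<bar>y\<bar> powr \<alpha>"
    proof -
      have "(\<bar>y\<bar> / a) powr \<alpha> = \<bar>y\<bar> powr \<alpha> / a powr \<alpha>" using a by (simp add: powr_divide)
      also have "\<dots> = a powr (-\<alpha>) * \<bar>y\<bar> powr \<alpha>" by (simp add: powr_minus divide_inverse)
      finally show ?thesis .
    qed
    ultimately show ?thesis using True unfolding g2_def h_def by simp
  next
    case False
    then have "y \<notin> {-a..a}" using that by auto
    then show ?thesis using False unfolding g2_def h_def by simp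
  qed
  have "(\<integral>\<^sup>+y. ennreal (g2 \<alpha> a y) \<partial>\<nu>) = (\<integral>\<^sup>+y. ennreal (a powr (-\<alpha>) * h y) \<partial>\<nu>)"
    by (rule nn_integral_cong_AE) (use ae1 ae2 eq in \<open>auto elim!: AE_mp\<close>)
  also have "\<dots> = ennreal (HH \<alpha> \<nu> a)"
    unfolding HH using int by (intro nn_integral_eq_integral) (auto simp: h_def)
  finally show "(\<integral>\<^sup>+y. ennreal (g2 \<alpha> a y) \<partial>\<nu>) = ennreal (HH \<alpha> \<nu> a)" .
  show "0 \<le> HH \<alpha> \<nu> a" unfolding HH h_def by (intro integral_nonneg_AE) auto
qed


fun Aseq :: "real \<Rightarrow> real \<Rightarrow> nat \<Rightarrow> real" where
  "Aseq G H 0 = 1"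
| "Aseq G H (Suc k) = Aseq G H k * G + G ^ k * H"

lemma Aseq_nonneg: "0 \<le> G \<Longrightarrow> 0 \<le> H \<Longrightarrow> 0 \<le> Aseq G H k"
  by (induction k) auto

lemma Aseq_closed: "Aseq G H k * G = G ^ Suc k + real k * H * G ^ k"
  by (induction k) (auto simp: algebra_simps)

lemma IIw_formula:
  assumes P: "prob_space \<nu>" and sn: "sets \<nu> = sets borel" and a: "0 < a" and al: "0 < \<alpha>"
    and sym: "distr \<nu> borel uminus = \<nu>" and na: "emeasure \<nu> {a} = 0"
  shows "IIw \<alpha> \<nu> a a k x = ennreal (Aseq (GG \<alpha> \<nu> a) (HH \<alpha> \<nu> a) k * g1 \<alpha> a x + GG \<alpha> \<nu> a ^ k * g2 \<alpha> a x)"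
proof (induction k arbitrary: x)
  case 0
  show ?case
  proof (cases "\<bar>x\<bar> < a")
    case True
    then show ?thesis by (simp add: g1_def g2_def indicator_def)
  next
    case False
    then show ?thesis by (simp add: g1_def g2_def indicator_def)
  qed
next
  case (Suc k)
  define G where "G = GG \<alpha> \<nu> a"
  define H where "H = HH \<alpha> \<nu> a"
  define A where "A = Aseq G H k"
  define B where "B = G ^ k"
  have G0: "0 \<le> G" unfolding G_def by (rule nu_G(2)[OF P sn a al])
  have H0: "0 \<le> H" unfolding H_def by (rule nu_H(2)[OF P sn a al sym na])
  have A0: "0 \<le> A" unfolding A_def using G0 H0 by (rule Aseq_nonneg)
  have B0: "0 \<le> B" unfolding B_def using G0 by simp
  have IG: "(\<integral>\<^sup>+y. ennreal (g1 \<alpha> a y) \<partial>\<nu>) = ennreal G" unfolding G_def by (rule nu_G(1)[OF P sn a al])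
  have IH: "(\<integral>\<^sup>+y. ennreal (g2 \<alpha> a y) \<partial>\<nu>) = ennreal H" unfolding H_def by (rule nu_H(1)[OF P sn a al sym na])
  have g1x: "0 \<le> g1 \<alpha> a x" by (rule g1_nonneg[OF a al])
  have g2x: "0 \<le> g2 \<alpha> a x" by (rule g2_nonneg)
  have inner: "(\<integral>\<^sup>+z. ennreal (A * g1 \<alpha> a z + B * g2 \<alpha> a z) \<partial>kendall_pt \<alpha> x y)
     = ennreal ((A * g1 \<alpha> a x + B * g2 \<alpha> a x) * g1 \<alpha> a y + (B * g1 \<alpha> a x) * g2 \<alpha> a y)" for y
  proof -
    have "(\<integral>\<^sup>+z. ennreal (A * g1 \<alpha> a z + B * g2 \<alpha> a z) \<partial>kendall_pt \<alpha> x y)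
       = ennreal A * ennreal (g1 \<alpha> a x * g1 \<alpha> a y) + ennreal B * ennreal (g2 \<alpha> a x * g1 \<alpha> a y + g1 \<alpha> a x * g2 \<alpha> a y)"
      by (subst LIN) (simp_all add: A0 B0 a al K1 K2)
    also have "\<dots> = ennreal (A * (g1 \<alpha> a x * g1 \<alpha> a y) + B * (g2 \<alpha> a x * g1 \<alpha> a y + g1 \<alpha> a x * g2 \<alpha> a y))"
      using A0 B0 g1x g2x g1_nonneg[OF a al, of y] g2_nonneg[of \<alpha> a y]
      by (simp only: ennreal_mult ennreal_plus mult_nonneg_nonneg add_nonneg_nonneg)
    also have "A * (g1 \<alpha> a x * g1 \<alpha> a y) + B * (g2 \<alpha> a x * g1 \<alpha> a y + g1 \<alpha> a x * g2 \<alpha> a y)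
       = (A * g1 \<alpha> a x + B * g2 \<alpha> a x) * g1 \<alpha> a y + (B * g1 \<alpha> a x) * g2 \<alpha> a y"
      by (simp add: algebra_simps)
    finally show ?thesis .
  qed
  have int: "(\<integral>\<^sup>+z. ennreal (A * g1 \<alpha> a z + B * g2 \<alpha> a z) \<partial>kstep \<alpha> \<nu> x)
      = ennreal (g1 \<alpha> a x * (A * G + B * H) + g2 \<alpha> a x * (B * G))"
  proof -
    have "(\<integral>\<^sup>+z. ennreal (A * g1 \<alpha> a z + B * g2 \<alpha> a z) \<partial>kstep \<alpha> \<nu> x)
        = (\<integral>\<^sup>+y. (\<integral>\<^sup>+z. ennreal (A * g1 \<alpha> a z + B * g2 \<alpha> a z) \<partial>kendall_pt \<alpha> x y) \<partial>\<nu>)"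
      by (rule nn_integral_kstep[OF sn]) measurable
    also have "\<dots> = (\<integral>\<^sup>+y. ennreal ((A * g1 \<alpha> a x + B * g2 \<alpha> a x) * g1 \<alpha> a y + (B * g1 \<alpha> a x) * g2 \<alpha> a y) \<partial>\<nu>)"
      by (simp only: inner)
    also have "\<dots> = ennreal (A * g1 \<alpha> a x + B * g2 \<alpha> a x) * ennreal G + ennreal (B * g1 \<alpha> a x) * ennreal H"
      using A0 B0 g1x g2x by (subst LIN[OF sn]) (simp_all add: a al IG IH)
    also have "\<dots> = ennreal ((A * g1 \<alpha> a x + B * g2 \<alpha> a x) * G + (B * g1 \<alpha> a x) * H)"
      using A0 B0 g1x g2x G0 H0
      by (simp only: ennreal_mult ennreal_plus mult_nonneg_nonneg add_nonneg_nonneg)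
    also have "(A * g1 \<alpha> a x + B * g2 \<alpha> a x) * G + (B * g1 \<alpha> a x) * H = g1 \<alpha> a x * (A * G + B * H) + g2 \<alpha> a x * (B * G)"
      by (simp add: algebra_simps)
    finally show ?thesis .
  qed
  have step: "IIw \<alpha> \<nu> a a (Suc k) x = indicator {..a} x * ennreal (g1 \<alpha> a x * (A * G + B * H) + g2 \<alpha> a x * (B * G))"
  proof -
    have "IIw \<alpha> \<nu> a a k = (\<lambda>z. ennreal (A * g1 \<alpha> a z + B * g2 \<alpha> a z))"
      unfolding A_def B_def G_def H_def by (rule ext) (rule Suc.IH)
    then show ?thesis using int by simp
  qed
  have rhs: "Aseq G H (Suc k) * g1 \<alpha> a x + G ^ Suc k * g2 \<alpha> a x = g1 \<alpha> a x * (A * G + B * H) + g2 \<alpha> a x * (B * G)"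
    unfolding A_def B_def by (simp add: algebra_simps)
  show ?case
  proof (cases "x \<le> a")
    case True
    then show ?thesis using step rhs unfolding G_def H_def by simp
  next
    case False
    then have "g1 \<alpha> a x = 0" "g2 \<alpha> a x = 0" by (auto simp: g1_def g2_def)
    then show ?thesis using step False unfolding G_def H_def by simp
  qed
qed


theorem mainTheorem6:
  fixes \<alpha> a :: real and \<nu> :: "real measure" and n :: nat
  assumes "\<alpha> > 0"
    and "prob_space \<nu>" and "sets \<nu> = sets borel"
    and "distr \<nu> borel uminus = \<nu>"
    and "emeasure \<nu> {0} = 0"
    and "a > 0" and "emeasure \<nu> {a} = 0"
    and "n \<ge> 1"
  shows "II \<alpha> \<nu> n a a =
    ennreal (GG \<alpha> \<nu> a ^ (n - 1) * (real n * HH \<alpha> \<nu> a + GG \<alpha> \<nu> a))"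
proof -
  note P = assms(2) and sn = assms(3) and al = assms(1) and a = assms(6) and sym = assms(4) and na = assms(7)
  define G where "G = GG \<alpha> \<nu> a"
  define H where "H = HH \<alpha> \<nu> a"
  define k where "k = n - 1"
  have nk: "n = Suc k" unfolding k_def using assms(8) by simp
  have G0: "0 \<le> G" unfolding G_def by (rule nu_G(2)[OF P sn a al])
  have H0: "0 \<le> H" unfolding H_def by (rule nu_H(2)[OF P sn a al sym na])
  have A0: "0 \<le> Aseq G H k" using G0 H0 by (rule Aseq_nonneg)
  have IG: "(\<integral>\<^sup>+y. ennreal (g1 \<alpha> a y) \<partial>\<nu>) = ennreal G" unfolding G_def by (rule nu_G(1)[OF P sn a al])
  have IH: "(\<integral>\<^sup>+y. ennreal (g2 \<alpha> a y) \<partial>\<nu>) = ennreal H" unfolding H_def by (rule nu_H(1)[OF P sn a al sym na])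
  have "II \<alpha> \<nu> n a a = (\<integral>\<^sup>+x. ennreal (Aseq G H k * g1 \<alpha> a x + G ^ k * g2 \<alpha> a x) \<partial>\<nu>)"
  proof -
    have "IIw \<alpha> \<nu> a a k = (\<lambda>x. ennreal (Aseq G H k * g1 \<alpha> a x + G ^ k * g2 \<alpha> a x))"
      unfolding G_def H_def by (rule ext) (rule IIw_formula[OF P sn a al sym na])
    then show ?thesis unfolding II_def k_def by simp
  qed
  also have "\<dots> = ennreal (Aseq G H k) * ennreal G + ennreal (G ^ k) * ennreal H"
    using A0 G0 by (subst LIN[OF sn]) (simp_all add: a al IG IH)
  also have "\<dots> = ennreal (Aseq G H k * G + G ^ k * H)"
    using A0 G0 H0 by (simp only: ennreal_mult ennreal_plus mult_nonneg_nonneg add_nonneg_nonneg zero_le_power)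
  also have "Aseq G H k * G + G ^ k * H = G ^ (n - 1) * (real n * H + G)"
    unfolding Aseq_closed nk by (simp add: algebra_simps)
  finally show ?thesis unfolding G_def H_def .
qed

end
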